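(* Let $G=(A\cup B,E)$ be a bipartite graph containing distinct vertices $a_1,a_2,a_3,a_4\in A$ and distinct $b_1,b_2\in B$ with $a_1b_1\in E$, $a_2b_1\notin E$, $a_2b_2\in E$, $a_3b_1\in E$, $a_3b_2\notin E$, $a_4b_2\in E$ (the adjacencies $a_1b_2$ and $a_4b_1$ being arbitrary). Then there exists an ordering $\sigma_A$ of $A$ such that $G$ admits no Stick representation in which, ordering the horizontal segments by where they touch the ground line from left to right, the $i$th horizontal segment corresponds to the $i$th vertex of $\sigma_A$.
   Context: A Stick representation of a bipartite graph $G=(A\cup B,E)$ (with $A$ horizontal and $B$ vertical) assigns to each vertex of $A$ a horizontal segment and to each vertex of $B$ a vertical segment such that the left endpoints of all horizontal segments and the bottom endpoints of all vertical segments lie on a fixed ground line $\ell$ of slope $-1$, and a horizontal and a vertical segment intersect if and only if the corresponding vertices are adjacent in $G$. *)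

theory Defs
  imports Main "HOL-Library.Product_Plus" Complex_Main
begin

text \<open>Ground line of slope -1: the points (t, c - t).\<close>

definition hseg :: "real \<Rightarrow> real \<Rightarrow> real \<Rightarrow> (real \<times> real) set" where
  "hseg c p l = {(u, c - p) | u. p \<le> u \<and> u \<le> p + l}"

definition vseg :: "real \<Rightarrow> real \<Rightarrow> real \<Rightarrow> (real \<times> real) set" where
  "vseg c q h = {(q, v) | v. c - q \<le> v \<and> v \<le> c - q + h}"

definition stick_rep ::
  "'v set \<Rightarrow> 'v set \<Rightarrow> ('v \<times> 'v) set \<Rightarrow> real \<Rightarrow> ('v \<Rightarrow> real) \<Rightarrow> ('v \<Rightarrow> real)
     \<Rightarrow> ('v \<Rightarrow> real) \<Rightarrow> ('v \<Rightarrow> real) \<Rightarrow> bool" where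
  "stick_rep A B E c p l q h \<longleftrightarrow>
     (\<forall>a\<in>A. 0 \<le> l a) \<and> (\<forall>b\<in>B. 0 \<le> h b) \<and>
     (\<forall>a\<in>A. \<forall>b\<in>B. (a, b) \<in> E \<longleftrightarrow> hseg c (p a) (l a) \<inter> vseg c (q b) (h b) \<noteq> {})"

definition respects_order :: "'v list \<Rightarrow> ('v \<Rightarrow> real) \<Rightarrow> bool" where
  "respects_order \<sigma> p \<longleftrightarrow> (\<forall>i j. i < j \<and> j < length \<sigma> \<longrightarrow> p (\<sigma> ! i) < p (\<sigma> ! j))"

end

theory Submission
  imports Defs
begin

lemma inter_iff:
  "hseg c p l \<inter> vseg c q h \<noteq> {} \<longleftrightarrow> p \<le> q \<and> q \<le> p + l \<and> q - p \<le> h"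
proof
  assume "hseg c p l \<inter> vseg c q h \<noteq> {}"
  then obtain x where "x \<in> hseg c p l" "x \<in> vseg c q h" by blast
  then show "p \<le> q \<and> q \<le> p + l \<and> q - p \<le> h"
    unfolding hseg_def vseg_def by auto
next
  assume H: "p \<le> q \<and> q \<le> p + l \<and> q - p \<le> h"
  then have "(q, c - p) \<in> hseg c p l \<inter> vseg c q h"
    unfolding hseg_def vseg_def by auto
  then show "hseg c p l \<inter> vseg c q h \<noteq> {}" by blast
qed

theorem mainTheorem7:
  fixes A B :: "'v set" and E :: "('v \<times> 'v) set"
    and a1 a2 a3 a4 b1 b2 :: 'v
  assumes "finite A" "finite B" "A \<inter> B = {}" "E \<subseteq> A \<times> B"
    and "a1 \<in> A" "a2 \<in> A" "a3 \<in> A" "a4 \<in> A" "distinct [a1, a2, a3, a4]"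
    and "b1 \<in> B" "b2 \<in> B" "b1 \<noteq> b2"
    and "(a1, b1) \<in> E" "(a2, b1) \<notin> E" "(a2, b2) \<in> E"
    and "(a3, b1) \<in> E" "(a3, b2) \<notin> E" "(a4, b2) \<in> E"
  shows "\<exists>\<sigma>. distinct \<sigma> \<and> set \<sigma> = A \<and>
           \<not> (\<exists>c p l q h. stick_rep A B E c p l q h \<and> respects_order \<sigma> p)"
proof -
  have "finite (A - {a1, a2, a3, a4})" using assms(1) by simp
  from finite_distinct_list[OF this] obtain xs where xs: "distinct xs" "set xs = A - {a1, a2, a3, a4}"
    by metis
  define \<sigma> where "\<sigma> = a1 # a2 # a3 # a4 # xs"
  have d: "distinct \<sigma>" using xs assms(9) unfolding \<sigma>_def by auto
  have s0: "set \<sigma> = {a1, a2, a3, a4} \<union> (A - {a1, a2, a3, a4})"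
    unfolding \<sigma>_def by (simp only: list.set xs(2)) blast
  have s: "set \<sigma> = A" unfolding s0 using assms(5-8) by fast
  have "\<not> (stick_rep A B E c p l q h \<and> respects_order \<sigma> p)" for c p l q h
  proof
    assume H: "stick_rep A B E c p l q h \<and> respects_order \<sigma> p"
    have R: "\<And>i j. i < j \<Longrightarrow> j < length \<sigma> \<Longrightarrow> p (\<sigma> ! i) < p (\<sigma> ! j)"
      using H unfolding respects_order_def by blast
    have L: "length \<sigma> = 4 + length xs" unfolding \<sigma>_def by simp
    have o12: "p a1 < p a2" using R[of 0 1] L unfolding \<sigma>_def by simp
    have o23: "p a2 < p a3" using R[of 1 2] L unfolding \<sigma>_def by simp
    have o34: "p a3 < p a4" using R[of 2 3] L unfolding \<sigma>_def by simp
    have E: "\<And>a b. a \<in> A \<Longrightarrow> b \<in> B \<Longrightarrow> (a, b) \<in> E \<longleftrightarrow> p a \<le> q b \<and> q b \<le> p a + l a \<and> q b - p a \<le> h b"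
      using H unfolding stick_rep_def by (simp add: inter_iff)
    have e11: "p a1 \<le> q b1 \<and> q b1 \<le> p a1 + l a1 \<and> q b1 - p a1 \<le> h b1" using E[OF assms(5) assms(10)] assms(13) by simp
    have e21: "\<not> (p a2 \<le> q b1 \<and> q b1 \<le> p a2 + l a2 \<and> q b1 - p a2 \<le> h b1)" using E[OF assms(6) assms(10)] assms(14) by simp
    have e22: "p a2 \<le> q b2 \<and> q b2 \<le> p a2 + l a2 \<and> q b2 - p a2 \<le> h b2" using E[OF assms(6) assms(11)] assms(15) by simp
    have e31: "p a3 \<le> q b1 \<and> q b1 \<le> p a3 + l a3 \<and> q b1 - p a3 \<le> h b1" using E[OF assms(7) assms(10)] assms(16) by simp
    have e32: "\<not> (p a3 \<le> q b2 \<and> q b2 \<le> p a3 + l a3 \<and> q b2 - p a3 \<le> h b2)" using E[OF assms(7) assms(11)] assms(17) by simp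
    have e42: "p a4 \<le> q b2 \<and> q b2 \<le> p a4 + l a4 \<and> q b2 - p a4 \<le> h b2" using E[OF assms(8) assms(11)] assms(18) by simp
    have g1: "p a2 \<le> q b1" using o23 e31 by linarith
    have g2: "q b1 - p a2 \<le> h b1" using o12 e11 by linarith
    have g3: "\<not> q b1 \<le> p a2 + l a2" using e21 g1 g2 by blast
    have g4: "q b2 \<le> p a2 + l a2" using e22 by blast
    have f3: "q b2 < q b1" using g3 g4 by linarith
    have h1: "p a3 \<le> q b2" using o34 e42 by linarith
    have h2: "q b2 - p a3 \<le> h b2" using o23 e22 by linarith
    have h3: "\<not> q b2 \<le> p a3 + l a3" using e32 h1 h2 by blast
    have h4: "q b1 \<le> p a3 + l a3" using e31 by blast
    show False using f3 h3 h4 by linarith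
  qed
  then show ?thesis using d s by blast
qed

end
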